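(* Let $\gamma>0$ and let $S_\gamma:=\mathfrak{B}^\gamma_{RBF}\circ\mathsf{F}_{2/\gamma^2}\circ(\mathfrak{B}^\gamma_{RBF})^{-1}:\mathcal{H}_\gamma\to\mathcal{H}_\gamma$. Then $$S_\gamma=\mathcal{M}^{-\gamma^2}_{RBF}\circ\mathcal{C}_\phi\circ\mathcal{M}^{\gamma^2}_{RBF},$$ where $\phi(z)=-iz$ and $\mathcal{C}_\phi g(z)=g(-iz)$ is the composition operator on $\mathcal{F}_{2/\gamma^2}$.
   Context: For $\alpha>0$, $\mathsf{F}_\alpha$ is the Fourier transform on $L^2(\mathbb{R})$ given by $\mathsf{F}_\alpha\varphi(\lambda)=\sqrt{\frac{\alpha}{2\pi}}\int_{\mathbb{R}}e^{-i\alpha\lambda x}\varphi(x)dx$. $\mathcal{F}_\alpha$ is the Fock space of entire $g$ with $\frac{\alpha}{\pi}\int_{\mathbb{C}}|g|^2e^{-\alpha|z|^2}dA<\infty$. $\mathcal{H}_\gamma$ is the Hilbert space of entire $f$ with $\frac{2}{\pi\gamma^2}\int_{\mathbb{C}}|f(z)|^2\exp\left(\frac{(z-\overline z)^2}{\gamma^2}\right)dA(z)<\infty$. $\mathcal{M}^{\gamma^2}_{RBF}f=e^{z^2/\gamma^2}f$ maps $\mathcal{H}_\gamma$ onto $\mathcal{F}_{2/\gamma^2}$, and $\mathcal{M}^{-\gamma^2}_{RBF}g=e^{-z^2/\gamma^2}g$ maps $\mathcal{F}_{2/\gamma^2}$ onto $\mathcal{H}_\gamma$. $\mathfrak{B}^\gamma_{RBF}:L^2(\mathbb{R})\to\mathcal{H}_\gamma$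 is the unitary RBF Segal–Bargmann transform $\mathfrak{B}^\gamma_{RBF}[\varphi](z)=\int_{\mathbb{R}}\mathcal{A}^\gamma_{RBF}(z,x)\varphi(x)dx$ with $\mathcal{A}^\gamma_{RBF}(z,x)=\sum_{n\ge0}e_n^\gamma(z)\psi_n^{2/\gamma^2}(x)$, $e_n^\gamma(z)=\sqrt{\frac{2^n}{\gamma^{2n}n!}}z^n\exp(-z^2/\gamma^2)$, $\psi_n^\alpha(x)=\left(\frac{\alpha}{\pi}\right)^{1/4}(2^nn!)^{-1/2}H_n(\sqrt\alpha x)e^{-\alpha x^2/2}$ ($H_n$ physicists' Hermite polynomials). *)

theory Defs
  imports "HOL-Analysis.Analysis"
begin

fun hermite :: "nat \<Rightarrow> real \<Rightarrow> real" where
  "hermite 0 x = 1"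
| "hermite (Suc 0) x = 2 * x"
| "hermite (Suc (Suc n)) x = 2 * x * hermite (Suc n) x - 2 * real (Suc n) * hermite n x"

definition L2R :: "(real \<Rightarrow> complex) set" where
  "L2R = {\<phi>. \<phi> \<in> borel_measurable lborel \<and> integrable lborel (\<lambda>x. (cmod (\<phi> x))\<^sup>2)}"

text \<open>Fourier transform F_alpha on L^2(R) (Plancherel extension):
  \<psi> is F_alpha \<phi> iff the truncated integrals converge to \<psi> in L^2.\<close>
definition fourier_L2 :: "real \<Rightarrow> (real \<Rightarrow> complex) \<Rightarrow> (real \<Rightarrow> complex) \<Rightarrow> bool" where
  "fourier_L2 \<alpha> \<phi> \<psi> \<longleftrightarrow> \<psi> \<in> L2R \<and>
     ((\<lambda>R::real. LINT t|lborel. (cmod (\<psi> t - complex_of_real (sqrt (\<alpha> / (2 * pi))) *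
          (LINT x|lborel. indicator {-R..R} x * (exp (- \<i> * complex_of_real (\<alpha> * t * x)) * \<phi> x))))\<^sup>2)
      \<longlongrightarrow> 0) at_top"

definition H_space :: "real \<Rightarrow> (complex \<Rightarrow> complex) set" where
  "H_space \<gamma> = {f. f holomorphic_on UNIV \<and>
     integrable lborel (\<lambda>z. (cmod (f z))\<^sup>2 * exp (Re ((z - cnj z)\<^sup>2) / \<gamma>\<^sup>2))}"

definition Fock_space :: "real \<Rightarrow> (complex \<Rightarrow> complex) set" where
  "Fock_space \<alpha> = {g. g holomorphic_on UNIV \<and>
     integrable lborel (\<lambda>z. (cmod (g z))\<^sup>2 * exp (- \<alpha> * (cmod z)\<^sup>2))}"

definition e_fun :: "real \<Rightarrow> nat \<Rightarrow> complex \<Rightarrow> complex" where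
  "e_fun \<gamma> n z = complex_of_real (sqrt (2 ^ n / (\<gamma> ^ (2 * n) * fact n))) * z ^ n * exp (- z\<^sup>2 / complex_of_real (\<gamma>\<^sup>2))"

definition psi_fun :: "real \<Rightarrow> nat \<Rightarrow> real \<Rightarrow> real" where
  "psi_fun \<alpha> n x = (\<alpha> / pi) powr (1/4) * (2 ^ n * fact n) powr (-1/2) *
     hermite n (sqrt \<alpha> * x) * exp (- \<alpha> * x\<^sup>2 / 2)"

definition RBF_kernel :: "real \<Rightarrow> complex \<Rightarrow> real \<Rightarrow> complex" where
  "RBF_kernel \<gamma> z x = (\<Sum>n. e_fun \<gamma> n z * complex_of_real (psi_fun (2 / \<gamma>\<^sup>2) n x))"

definition RBF_SB :: "real \<Rightarrow> (real \<Rightarrow> complex) \<Rightarrow> complex \<Rightarrow> complex" where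
  "RBF_SB \<gamma> \<phi> z = (LINT x|lborel. RBF_kernel \<gamma> z x * \<phi> x)"

definition M_RBF :: "real \<Rightarrow> (complex \<Rightarrow> complex) \<Rightarrow> complex \<Rightarrow> complex" where
  "M_RBF \<gamma> f z = exp (z\<^sup>2 / complex_of_real (\<gamma>\<^sup>2)) * f z"

definition M_RBF_inv :: "real \<Rightarrow> (complex \<Rightarrow> complex) \<Rightarrow> complex \<Rightarrow> complex" where
  "M_RBF_inv \<gamma> g z = exp (- z\<^sup>2 / complex_of_real (\<gamma>\<^sup>2)) * g z"

definition comp_op :: "(complex \<Rightarrow> complex) \<Rightarrow> (complex \<Rightarrow> complex) \<Rightarrow> complex \<Rightarrow> complex" where
  "comp_op \<phi> g z = g (\<phi> z)"

end

theory Submission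
  imports Defs "HOL-Probability.Probability" "HOL-Complex_Analysis.Complex_Analysis"
begin


lemma gauss_char:
  shows "integrable lborel (\<lambda>x::real. complex_of_real (exp (- x\<^sup>2 / 2)) * exp (\<i> * complex_of_real (t * x)))"
    and "(LINT x|lborel. complex_of_real (exp (- x\<^sup>2 / 2)) * exp (\<i> * complex_of_real (t * x)))
         = complex_of_real (sqrt (2 * pi) * exp (- t\<^sup>2 / 2))"
proof -
  have int: "integrable lborel (\<lambda>x::real. std_normal_density x *\<^sub>R exp (\<i> * complex_of_real (t * x)))"
    apply (rule Bochner_Integration.integrable_bound[OF integrable_normal_density[where \<mu>=0 and \<sigma>=1]])
    by measurable
  have eq: "(\<lambda>x::real. complex_of_real (exp (- x\<^sup>2 / 2)) * exp (\<i> * complex_of_real (t * x)))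
      = (\<lambda>x. complex_of_real (sqrt (2 * pi)) * (std_normal_density x *\<^sub>R exp (\<i> * complex_of_real (t * x))))"
    by (auto simp: std_normal_density_def scaleR_conv_of_real fun_eq_iff)
  show "integrable lborel (\<lambda>x::real. complex_of_real (exp (- x\<^sup>2 / 2)) * exp (\<i> * complex_of_real (t * x)))"
    unfolding eq by (rule integrable_mult_right[OF int])
  have "char std_normal_distribution t = (LINT x|lborel. std_normal_density x *\<^sub>R exp (\<i> * complex_of_real (t * x)))"
    unfolding char_def
    by (subst integral_density) (auto simp: normal_density_nonneg)
  then have "(LINT x|lborel. std_normal_density x *\<^sub>R exp (\<i> * complex_of_real (t * x))) = complex_of_real (exp (- t\<^sup>2 / 2))"
    using char_std_normal_distribution by metis
  then show "(LINT x|lborel. complex_of_real (exp (- x\<^sup>2 / 2)) * exp (\<i> * complex_of_real (t * x)))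
         = complex_of_real (sqrt (2 * pi) * exp (- t\<^sup>2 / 2))"
    unfolding eq integral_mult_right_zero by simp
qed

lemma gauss_complex:
  fixes a :: real and b :: complex
  assumes a: "a > 0"
  shows "integrable lborel (\<lambda>x::real. exp (- (complex_of_real a * (complex_of_real x)\<^sup>2) / 2 + b * complex_of_real x))"
    and "(LINT x|lborel. exp (- (complex_of_real a * (complex_of_real x)\<^sup>2) / 2 + b * complex_of_real x))
         = complex_of_real (sqrt (2 * pi / a)) * exp (b\<^sup>2 / (2 * complex_of_real a))"
proof -
  define p where "p = Re b"
  define q where "q = Im b"
  define s where "s = sqrt a"
  have s: "s > 0" "s * s = a" using a by (auto simp: s_def)
  have b: "b = complex_of_real p + \<i> * complex_of_real q" by (simp add: p_def q_def complex_eq)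
  define f where "f = (\<lambda>x::real. exp (- (complex_of_real a * (complex_of_real x)\<^sup>2) / 2 + b * complex_of_real x))"
  define h where "h = (\<lambda>x::real. complex_of_real (exp (- x\<^sup>2 / 2)) * exp (\<i> * complex_of_real ((q / s) * x)))"
  define C where "C = exp (complex_of_real (p\<^sup>2 / (2 * a)) + \<i> * complex_of_real (q * p / a))"
  have R: "- (a * (p / a + 1 / s * y)\<^sup>2) / 2 + p * (p / a + 1 / s * y) = p\<^sup>2 / (2 * a) + (- y\<^sup>2 / 2)" for y
    using s a by (simp add: field_simps power2_eq_square)
  have I: "q * (p / a + 1 / s * y) = q * p / a + q / s * y" for y
    using s by (simp add: field_simps)
  have pt: "f (p / a + 1 / s * y) = C * h y" for y
  proof -
    have "- (complex_of_real a * (complex_of_real (p / a + 1 / s * y))\<^sup>2) / 2 + b * complex_of_real (p / a + 1 / s * y)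
        = complex_of_real (- (a * (p / a + 1 / s * y)\<^sup>2) / 2 + p * (p / a + 1 / s * y))
          + \<i> * complex_of_real (q * (p / a + 1 / s * y))"
      unfolding b by (simp add: algebra_simps)
    also have "\<dots> = (complex_of_real (p\<^sup>2 / (2 * a)) + \<i> * complex_of_real (q * p / a))
        + (complex_of_real (- y\<^sup>2 / 2) + \<i> * complex_of_real (q / s * y))"
      unfolding R I by (simp add: algebra_simps)
    finally have e: "- (complex_of_real a * (complex_of_real (p / a + 1 / s * y))\<^sup>2) / 2 + b * complex_of_real (p / a + 1 / s * y)
        = (complex_of_real (p\<^sup>2 / (2 * a)) + \<i> * complex_of_real (q * p / a))
        + (complex_of_real (- y\<^sup>2 / 2) + \<i> * complex_of_real (q / s * y))" .
    have "C * h y = exp ((complex_of_real (p\<^sup>2 / (2 * a)) + \<i> * complex_of_real (q * p / a))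
        + (complex_of_real (- y\<^sup>2 / 2) + \<i> * complex_of_real (q / s * y)))"
      unfolding C_def h_def by (simp only: exp_add exp_of_real mult.assoc)
    then show ?thesis unfolding f_def e by simp
  qed
  have hint: "integrable lborel h" unfolding h_def by (rule gauss_char(1))
  have hval: "integral\<^sup>L lborel h = complex_of_real (sqrt (2 * pi) * exp (- (q / s)\<^sup>2 / 2))"
    unfolding h_def by (rule gauss_char(2))
  have "integrable lborel (\<lambda>y. f (p / a + 1 / s * y))"
    unfolding pt using hint by (rule integrable_mult_right)
  then show "integrable lborel (\<lambda>x::real. exp (- (complex_of_real a * (complex_of_real x)\<^sup>2) / 2 + b * complex_of_real x))"
    using lborel_integrable_real_affine_iff[of "1 / s" f "p / a"] s unfolding f_def by simp
  have "integral\<^sup>L lborel f = \<bar>1 / s\<bar> *\<^sub>R integral\<^sup>L lborel (\<lambda>y. f (p / a + 1 / s * y))"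
    using lborel_integral_real_affine[of "1 / s" f "p / a"] s by simp
  also have "\<dots> = complex_of_real (1 / s) * (C * complex_of_real (sqrt (2 * pi) * exp (- (q / s)\<^sup>2 / 2)))"
    unfolding pt integral_mult_right_zero hval using s by (simp add: scaleR_conv_of_real)
  also have "\<dots> = complex_of_real (sqrt (2 * pi / a)) * exp (b\<^sup>2 / (2 * complex_of_real a))"
  proof -
    have 1: "1 / s * sqrt (2 * pi) = sqrt (2 * pi / a)"
      using s unfolding s_def by (simp add: real_sqrt_divide)
    have 2: "C * complex_of_real (exp (- (q / s)\<^sup>2 / 2)) = exp (b\<^sup>2 / (2 * complex_of_real a))"
    proof -
      have "C * complex_of_real (exp (- (q / s)\<^sup>2 / 2)) =
          exp (complex_of_real (p\<^sup>2 / (2 * a)) + \<i> * complex_of_real (q * p / a) + complex_of_real (- (q / s)\<^sup>2 / 2))"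
        unfolding C_def by (simp only: exp_add exp_of_real mult.assoc)
      also have "complex_of_real (p\<^sup>2 / (2 * a)) + \<i> * complex_of_real (q * p / a) + complex_of_real (- (q / s)\<^sup>2 / 2)
          = b\<^sup>2 / (2 * complex_of_real a)"
        unfolding b using s a by (simp add: field_simps power2_eq_square)
      finally show ?thesis .
    qed
    show ?thesis
      by (subst 1[symmetric], subst 2[symmetric]) (simp add: mult_ac)
  qed
  finally show "(LINT x|lborel. exp (- (complex_of_real a * (complex_of_real x)\<^sup>2) / 2 + b * complex_of_real x))
         = complex_of_real (sqrt (2 * pi / a)) * exp (b\<^sup>2 / (2 * complex_of_real a))"
    unfolding f_def .
qed




fun hermC :: "nat \<Rightarrow> complex \<Rightarrow> complex" where
  "hermC 0 x = 1"
| "hermC (Suc 0) x = 2 * x"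
| "hermC (Suc (Suc n)) x = 2 * x * hermC (Suc n) x - 2 * of_nat (Suc n) * hermC n x"

lemma hermC_real: "hermC n (complex_of_real x) = complex_of_real (hermite n x)"
  by (induction n x rule: hermite.induct) auto

lemma hermC_deriv_aux:
  "(\<forall>w. (hermC (Suc n) has_field_derivative (2 * of_nat (Suc n) * hermC n w)) (at w)) \<and>
   (\<forall>w. (hermC (Suc (Suc n)) has_field_derivative (2 * of_nat (Suc (Suc n)) * hermC (Suc n) w)) (at w))"
proof (induction n)
  case 0
  have e1: "hermC (Suc 0) = (\<lambda>x. 2 * x)" by (rule ext) simp
  have "\<And>w. (hermC (Suc 0) has_field_derivative 2) (at w)"
    unfolding e1 by (auto intro!: derivative_eq_intros)
  have e2: "hermC (Suc (Suc 0)) = (\<lambda>x. 2 * x * (2 * x) - 2)" by (rule ext) simp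
  moreover have "\<And>w. (hermC (Suc (Suc 0)) has_field_derivative (8 * w)) (at w)"
    unfolding e2 by (auto intro!: derivative_eq_intros)
  ultimately show ?case by (auto simp: numeral_eq_Suc)
next
  case (Suc n)
  have "(hermC (Suc (Suc (Suc n))) has_field_derivative (2 * of_nat (Suc (Suc (Suc n))) * hermC (Suc (Suc n)) w)) (at w)" for w
  proof -
    have D: "((\<lambda>x. 2 * x * hermC (Suc (Suc n)) x - 2 * of_nat (Suc (Suc n)) * hermC (Suc n) x) has_field_derivative
        (2 * hermC (Suc (Suc n)) w + 2 * w * (2 * of_nat (Suc (Suc n)) * hermC (Suc n) w)
          - 2 * of_nat (Suc (Suc n)) * (2 * of_nat (Suc n) * hermC n w))) (at w)"
    proof -
      have d1: "(hermC (Suc n) has_field_derivative (2 * of_nat (Suc n) * hermC n w)) (at w)" for w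
        using Suc.IH by blast
      have d2: "(hermC (Suc (Suc n)) has_field_derivative (2 * of_nat (Suc (Suc n)) * hermC (Suc n) w)) (at w)" for w
        using Suc.IH by blast
      show ?thesis
        by (rule derivative_eq_intros d1 d2 refl | simp)+
    qed
    have E: "2 * hermC (Suc (Suc n)) w + 2 * w * (2 * of_nat (Suc (Suc n)) * hermC (Suc n) w)
          - 2 * of_nat (Suc (Suc n)) * (2 * of_nat (Suc n) * hermC n w)
        = 2 * of_nat (Suc (Suc (Suc n))) * hermC (Suc (Suc n)) w"
      by (simp add: algebra_simps)
    have e: "hermC (Suc (Suc (Suc n))) = (\<lambda>x. 2 * x * hermC (Suc (Suc n)) x - 2 * of_nat (Suc (Suc n)) * hermC (Suc n) x)"
      by (rule ext) (simp only: hermC.simps)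
    show ?thesis unfolding e using D unfolding E .
  qed
  then show ?case using Suc.IH by blast
qed

lemma hermC_deriv: "(hermC (Suc n) has_field_derivative (2 * of_nat (Suc n) * hermC n w)) (at w)"
  using hermC_deriv_aux by blast

lemma hermC_deriv0: "(hermC 0 has_field_derivative 0) (at w)"
proof -
  have e0: "hermC 0 = (\<lambda>x. 1)" by (rule ext) simp
  show ?thesis unfolding e0 by (auto intro!: derivative_eq_intros)
qed

definition Gf :: "complex \<Rightarrow> complex \<Rightarrow> complex" where
  "Gf y t = exp (2 * y * t - t\<^sup>2)"

lemma Gf_deriv: "(Gf y has_field_derivative ((2 * y - 2 * t) * Gf y t)) (at t)"
  unfolding Gf_def[abs_def] by (auto intro!: derivative_eq_intros simp: power2_eq_square algebra_simps)

lemma Gf_deriv_iter: "(deriv ^^ n) (Gf y) = (\<lambda>t. hermC n (y - t) * Gf y t)"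
proof (induction n)
  case 0
  then show ?case by simp
next
  case (Suc n)
  have "deriv (\<lambda>t. hermC n (y - t) * Gf y t) t = hermC (Suc n) (y - t) * Gf y t" for t
  proof (rule DERIV_imp_deriv)
    show "((\<lambda>t. hermC n (y - t) * Gf y t) has_field_derivative hermC (Suc n) (y - t) * Gf y t) (at t)"
    proof (cases n)
      case 0
      show ?thesis unfolding 0
        by (rule derivative_eq_intros refl Gf_deriv hermC_deriv0 | simp add: algebra_simps)+
    next
      case (Suc m)
      have h: "((\<lambda>x. hermC (Suc m) (y - x)) has_field_derivative (2 * of_nat (Suc m) * hermC m (y - t)) * (-1)) (at t)"
        by (rule DERIV_chain2[OF hermC_deriv]) (auto intro!: derivative_eq_intros)
      have "((\<lambda>t. hermC (Suc m) (y - t) * Gf y t) has_field_derivative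
          hermC (Suc m) (y - t) * ((2 * y - 2 * t) * Gf y t) + (2 * of_nat (Suc m) * hermC m (y - t)) * (-1) * Gf y t) (at t)"
        by (rule DERIV_mult'[OF h Gf_deriv])
      moreover have "hermC (Suc m) (y - t) * ((2 * y - 2 * t) * Gf y t) + (2 * of_nat (Suc m) * hermC m (y - t)) * (-1) * Gf y t
          = hermC (Suc (Suc m)) (y - t) * Gf y t"
        by (simp add: algebra_simps)
      ultimately show ?thesis unfolding Suc by simp
    qed
  qed
  moreover have "(deriv ^^ Suc n) (Gf y) = deriv (\<lambda>t. hermC n (y - t) * Gf y t)"
    using Suc.IH by simp
  ultimately show ?case by (simp add: fun_eq_iff)
qed

lemma hermC_sums: "(\<lambda>n. hermC n y / fact n * t ^ n) sums Gf y t"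
proof -
  have "Gf y holomorphic_on ball 0 (norm t + 1)"
    using Gf_deriv by (auto simp: holomorphic_on_def field_differentiable_def intro: has_field_derivative_at_within)
  from holomorphic_power_series[OF this, of t]
  show ?thesis by (simp add: Gf_deriv_iter Gf_def)
qed



lemma coef_identity:
  fixes \<gamma> :: real assumes g: "\<gamma> > 0"
  shows "sqrt (2 ^ n / (\<gamma> ^ (2 * n) * fact n)) * (2 ^ n * fact n) powr (-1/2) = 1 / (\<gamma> ^ n * fact n)"
proof -
  have pos: "(2::real) ^ n * fact n > 0" by simp
  have m: "(-1/2::real) = -(1/2)" by simp
  have "(2 ^ n * fact n) powr (-1/2) = 1 / sqrt ((2::real) ^ n * fact n)"
    by (simp only: m powr_minus_divide powr_half_sqrt[OF less_imp_le[OF pos]])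
  then have "sqrt (2 ^ n / (\<gamma> ^ (2 * n) * fact n)) * (2 ^ n * fact n) powr (-1/2)
      = sqrt (2 ^ n / (\<gamma> ^ (2 * n) * fact n)) / sqrt (2 ^ n * fact n)"
    by simp
  also have "\<dots> = sqrt (2 ^ n / (\<gamma> ^ (2 * n) * fact n) / (2 ^ n * fact n))"
    by (rule real_sqrt_divide[symmetric])
  also have "2 ^ n / (\<gamma> ^ (2 * n) * fact n) / (2 ^ n * fact n) = (1 / (\<gamma> ^ n * fact n))\<^sup>2"
    using g by (simp add: power_mult power2_eq_square field_simps power_mult_distrib)
  also have "sqrt ((1 / (\<gamma> ^ n * fact n))\<^sup>2) = 1 / (\<gamma> ^ n * fact n)"
    using g by simp
  finally show ?thesis .
qed

definition kc :: "real \<Rightarrow> real" where "kc \<gamma> = (2 / \<gamma>\<^sup>2 / pi) powr (1/4)"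

lemma kernel_closed:
  fixes \<gamma> :: real assumes g: "\<gamma> > 0"
  shows "RBF_kernel \<gamma> z x = complex_of_real (kc \<gamma>) * exp (- 2 * z\<^sup>2 / complex_of_real (\<gamma>\<^sup>2)) *
     exp (- (complex_of_real (2 / \<gamma>\<^sup>2) * (complex_of_real x)\<^sup>2) / 2 + (2 * complex_of_real (sqrt 2) * z / complex_of_real (\<gamma>\<^sup>2)) * complex_of_real x)"
proof -
  define Y where "Y = complex_of_real (sqrt (2 / \<gamma>\<^sup>2) * x)"
  define T where "T = z / complex_of_real \<gamma>"
  define C0 where "C0 = complex_of_real (kc \<gamma>) * exp (- z\<^sup>2 / complex_of_real (\<gamma>\<^sup>2)) * complex_of_real (exp (- (2 / \<gamma>\<^sup>2) * x\<^sup>2 / 2))"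
  have tm: "e_fun \<gamma> n z * complex_of_real (psi_fun (2 / \<gamma>\<^sup>2) n x) = C0 * (hermC n Y / fact n * T ^ n)" for n
  proof -
    have c: "complex_of_real (sqrt (2 ^ n / (\<gamma> ^ (2 * n) * fact n))) * complex_of_real ((2 ^ n * fact n) powr (-1/2))
       = 1 / (complex_of_real \<gamma> ^ n * fact n)"
      by (simp only: of_real_mult[symmetric] coef_identity[OF g]) simp
    have "e_fun \<gamma> n z * complex_of_real (psi_fun (2 / \<gamma>\<^sup>2) n x) =
      (complex_of_real (sqrt (2 ^ n / (\<gamma> ^ (2 * n) * fact n))) * complex_of_real ((2 ^ n * fact n) powr (-1/2)))
        * (complex_of_real (kc \<gamma>) * exp (- z\<^sup>2 / complex_of_real (\<gamma>\<^sup>2)) * complex_of_real (exp (- (2 / \<gamma>\<^sup>2) * x\<^sup>2 / 2)))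
        * (hermC n Y * z ^ n)"
      unfolding e_fun_def psi_fun_def kc_def Y_def hermC_real by (simp add: mult_ac)
    also have "\<dots> = C0 * (hermC n Y / fact n * T ^ n)"
      unfolding c C0_def T_def using g by (simp add: power_divide)
    finally show ?thesis .
  qed
  have "(\<lambda>n. C0 * (hermC n Y / fact n * T ^ n)) sums (C0 * Gf Y T)"
    by (rule sums_mult[OF hermC_sums])
  then have "RBF_kernel \<gamma> z x = C0 * Gf Y T"
    unfolding RBF_kernel_def tm by (rule sums_unique[symmetric])
  also have "\<dots> = complex_of_real (kc \<gamma>) * exp (- 2 * z\<^sup>2 / complex_of_real (\<gamma>\<^sup>2)) *
     exp (- (complex_of_real (2 / \<gamma>\<^sup>2) * (complex_of_real x)\<^sup>2) / 2 + (2 * complex_of_real (sqrt 2) * z / complex_of_real (\<gamma>\<^sup>2)) * complex_of_real x)"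
  proof -
    have sq: "sqrt (2 / \<gamma>\<^sup>2) = sqrt 2 / \<gamma>" using g by (simp add: real_sqrt_divide)
    have "C0 * Gf Y T = complex_of_real (kc \<gamma>) * exp (- z\<^sup>2 / complex_of_real (\<gamma>\<^sup>2) + complex_of_real (- (2 / \<gamma>\<^sup>2) * x\<^sup>2 / 2) + (2 * Y * T - T\<^sup>2))"
      unfolding C0_def Gf_def by (simp only: exp_add exp_of_real mult.assoc)
    also have "- z\<^sup>2 / complex_of_real (\<gamma>\<^sup>2) + complex_of_real (- (2 / \<gamma>\<^sup>2) * x\<^sup>2 / 2) + (2 * Y * T - T\<^sup>2)
      = - 2 * z\<^sup>2 / complex_of_real (\<gamma>\<^sup>2) + (- (complex_of_real (2 / \<gamma>\<^sup>2) * (complex_of_real x)\<^sup>2) / 2 + (2 * complex_of_real (sqrt 2) * z / complex_of_real (\<gamma>\<^sup>2)) * complex_of_real x)"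
      unfolding Y_def T_def sq using g by (simp add: field_simps power2_eq_square)
    finally show ?thesis by (simp only: exp_add mult.assoc)
  qed
  finally show ?thesis .
qed




lemma L2_mult_integrable:
  fixes f g :: "real \<Rightarrow> complex"
  assumes [measurable]: "f \<in> borel_measurable lborel" "g \<in> borel_measurable lborel"
    and fi: "integrable lborel (\<lambda>x. (cmod (f x))\<^sup>2)" and gi: "integrable lborel (\<lambda>x. (cmod (g x))\<^sup>2)"
  shows "integrable lborel (\<lambda>x. f x * g x)"
proof (rule Bochner_Integration.integrable_bound[OF Bochner_Integration.integrable_add[OF fi gi]])
  show "(\<lambda>x. f x * g x) \<in> borel_measurable lborel" by measurable
  show "AE x in lborel. norm (f x * g x) \<le> norm ((cmod (f x))\<^sup>2 + (cmod (g x))\<^sup>2)"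
  proof (intro AE_I2)
    fix x
    have "0 \<le> (cmod (f x) - cmod (g x))\<^sup>2" by simp
    then have "cmod (f x) * cmod (g x) \<le> (cmod (f x))\<^sup>2 + (cmod (g x))\<^sup>2"
      by (simp add: power2_eq_square algebra_simps) (smt (verit) norm_ge_zero mult_nonneg_nonneg)
    then show "norm (f x * g x) \<le> norm ((cmod (f x))\<^sup>2 + (cmod (g x))\<^sup>2)"
      by (simp add: norm_mult)
  qed
qed

lemma young_ineq:
  fixes a b e :: real assumes "e > 0"
  shows "a * b \<le> e / 2 * a\<^sup>2 + 1 / (2 * e) * b\<^sup>2"
proof -
  have "0 \<le> (e * a - b)\<^sup>2" by simp
  then have "2 * e * (a * b) \<le> e * (e * a\<^sup>2) + b\<^sup>2"
    by (simp add: power2_eq_square algebra_simps)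
  then show ?thesis using assms
    by (simp add: field_simps power2_eq_square)
qed

lemma L2_pair_bound:
  fixes f g :: "real \<Rightarrow> complex" and e :: real
  assumes [measurable]: "f \<in> borel_measurable lborel" "g \<in> borel_measurable lborel"
    and fi: "integrable lborel (\<lambda>x. (cmod (f x))\<^sup>2)" and gi: "integrable lborel (\<lambda>x. (cmod (g x))\<^sup>2)"
    and e: "e > 0"
  shows "cmod (LINT x|lborel. f x * g x) \<le> e / 2 * (LINT x|lborel. (cmod (f x))\<^sup>2) + 1 / (2 * e) * (LINT x|lborel. (cmod (g x))\<^sup>2)"
proof -
  have "cmod (LINT x|lborel. f x * g x) \<le> (LINT x|lborel. cmod (f x * g x))"
    by (rule integral_norm_bound)
  also have "\<dots> \<le> (LINT x|lborel. e / 2 * (cmod (f x))\<^sup>2 + 1 / (2 * e) * (cmod (g x))\<^sup>2)"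
    using integrable_norm[OF L2_mult_integrable[OF assms(1-4)]] fi gi young_ineq[OF e]
    by (intro integral_mono) (auto simp: norm_mult)
  also have "\<dots> = e / 2 * (LINT x|lborel. (cmod (f x))\<^sup>2) + 1 / (2 * e) * (LINT x|lborel. (cmod (g x))\<^sup>2)"
    using fi gi by simp
  finally show ?thesis .
qed

lemma mult_formula:
  fixes u g :: "real \<Rightarrow> complex" and \<beta> :: real
  assumes u: "integrable lborel u" and g: "integrable lborel g"
  shows "(LINT t|lborel. u t * (LINT x|lborel. exp (\<i> * complex_of_real (\<beta> * t * x)) * g x))
       = (LINT x|lborel. g x * (LINT t|lborel. u t * exp (\<i> * complex_of_real (\<beta> * t * x))))"
proof -
  have [measurable]: "u \<in> borel_measurable lborel" "g \<in> borel_measurable lborel"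
    using u g by (auto intro: borel_measurable_integrable)
  define F where "F = (\<lambda>t x. u t * (exp (\<i> * complex_of_real (\<beta> * t * x)) * g x))"
  have nF: "norm (F t x) = norm (u t) * norm (g x)" for t x
    unfolding F_def by (simp add: norm_mult norm_exp_i_times)
  have int: "integrable (lborel \<Otimes>\<^sub>M lborel) (case_prod F)"
  proof (rule lborel_pair.Fubini_integrable)
    show "case_prod F \<in> borel_measurable (lborel \<Otimes>\<^sub>M lborel)"
      unfolding F_def by measurable
    show "integrable lborel (\<lambda>t. LINT x|lborel. norm (case_prod F (t, x)))"
      unfolding split_conv nF using integrable_norm[OF u] by simp
    show "AE t in lborel. integrable lborel (\<lambda>x. case_prod F (t, x))"
    proof (intro AE_I2)
      fix t
      show "integrable lborel (\<lambda>x. case_prod F (t, x))"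
        unfolding F_def split_conv
        by (intro integrable_mult_right Bochner_Integration.integrable_bound[OF integrable_norm[OF g]])
           (auto simp: norm_mult norm_exp_i_times)
    qed
  qed
  have "(LINT t|lborel. u t * (LINT x|lborel. exp (\<i> * complex_of_real (\<beta> * t * x)) * g x))
      = (LINT t|lborel. LINT x|lborel. F t x)"
    unfolding F_def by simp
  also have "\<dots> = (LINT x|lborel. LINT t|lborel. F t x)"
    using lborel_pair.Fubini_integral[OF int] by simp
  also have "\<dots> = (LINT x|lborel. g x * (LINT t|lborel. u t * exp (\<i> * complex_of_real (\<beta> * t * x))))"
    unfolding F_def by (simp add: mult_ac)
  finally show ?thesis .
qed




lemma real_gauss:
  fixes a :: real assumes a: "a > 0"
  shows "integrable lborel (\<lambda>x. exp (- (a * x\<^sup>2) / 2))" and "(LINT x|lborel. exp (- (a * x\<^sup>2) / 2)) = sqrt (2 * pi / a)"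
proof -
  have e: "(\<lambda>x::real. exp (- (complex_of_real a * (complex_of_real x)\<^sup>2) / 2 + 0 * complex_of_real x))
      = (\<lambda>x. complex_of_real (exp (- (a * x\<^sup>2) / 2)))"
    by (auto simp: fun_eq_iff exp_of_real[symmetric])
  have i: "integrable lborel (\<lambda>x. complex_of_real (exp (- (a * x\<^sup>2) / 2)))"
    using gauss_complex(1)[OF a, of 0] unfolding e .
  from integrable_Re[OF i] show "integrable lborel (\<lambda>x. exp (- (a * x\<^sup>2) / 2))" by simp
  have "complex_of_real (LINT x|lborel. exp (- (a * x\<^sup>2) / 2)) = complex_of_real (sqrt (2 * pi / a))"
    using gauss_complex(2)[OF a, of 0] unfolding e by simp
  then show "(LINT x|lborel. exp (- (a * x\<^sup>2) / 2)) = sqrt (2 * pi / a)"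
    using of_real_eq_iff by blast
qed

lemma integral_reflect_shift:
  fixes f :: "real \<Rightarrow> 'a::{banach, second_countable_topology}"
  shows "(LINT x|lborel. f (y - x)) = (LINT x|lborel. f x)"
    and "integrable lborel (\<lambda>x. f (y - x)) \<longleftrightarrow> integrable lborel f"
proof -
  show "(LINT x|lborel. f (y - x)) = (LINT x|lborel. f x)"
    using lborel_integral_real_affine[where c="-1" and f=f and t=y] by simp
  show "integrable lborel (\<lambda>x. f (y - x)) \<longleftrightarrow> integrable lborel f"
    using lborel_integrable_real_affine_iff[where c="-1" and f=f and t=y] by simp
qed

definition hat :: "real \<Rightarrow> (real \<Rightarrow> complex) \<Rightarrow> real \<Rightarrow> complex" where
  "hat \<beta> g t = (LINT x|lborel. exp (\<i> * complex_of_real (\<beta> * t * x)) * g x)"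

lemma hat_measurable:
  assumes "integrable lborel g"
  shows "hat \<beta> g \<in> borel_measurable lborel"
proof -
  have [measurable]: "g \<in> borel_measurable lborel" using assms by (rule borel_measurable_integrable)
  show ?thesis unfolding hat_def by measurable
qed

lemma hat_bound:
  assumes "integrable lborel g"
  shows "cmod (hat \<beta> g t) \<le> (LINT x|lborel. cmod (g x))"
proof -
  have "cmod (hat \<beta> g t) \<le> (LINT x|lborel. cmod (exp (\<i> * complex_of_real (\<beta> * t * x)) * g x))"
    unfolding hat_def by (rule integral_norm_bound)
  also have "\<dots> = (LINT x|lborel. cmod (g x))"
    by (simp add: norm_mult norm_exp_i_times)
  finally show ?thesis .
qed

lemma conv_bound:
  fixes G K :: "real \<Rightarrow> real" and KB Kt :: real
  assumes Gm[measurable]: "G \<in> borel_measurable lborel" and Km[measurable]: "K \<in> borel_measurable lborel"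
    and G0: "\<And>x. G x \<ge> 0" and K0: "\<And>x. K x \<ge> 0" and KB: "\<And>x. K x \<le> KB"
    and Gi: "integrable lborel G" and G2: "integrable lborel (\<lambda>x. (G x)\<^sup>2)"
    and Ki: "integrable lborel K" and Kt: "(LINT x|lborel. K x) = Kt"
  shows "integrable lborel (\<lambda>x. G x * (LINT y|lborel. G y * K (y - x)))"
    and "(LINT x|lborel. G x * (LINT y|lborel. G y * K (y - x))) \<le> Kt * (LINT x|lborel. (G x)\<^sup>2)"
proof -
  define P where "P x = (LINT y|lborel. G y * K (y - x))" for x
  define Q where "Q x = (LINT y|lborel. (G y)\<^sup>2 * K (y - x))" for x
  have Pm[measurable]: "P \<in> borel_measurable lborel" unfolding P_def by measurable
  have Qm[measurable]: "Q \<in> borel_measurable lborel" unfolding Q_def by measurable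
  have KBpos: "KB \<ge> 0" using K0[of 0] KB[of 0] by linarith
  have GKb: "G y * K z \<le> KB * G y" for y z
    using mult_left_mono[OF KB[of z] G0[of y]] by (simp add: mult.commute)
  have G2Kb: "(G y)\<^sup>2 * K z \<le> KB * (G y)\<^sup>2" for y z
    using mult_left_mono[OF KB[of z], of "(G y)\<^sup>2"] by (simp add: mult.commute)
  have iGK: "integrable lborel (\<lambda>y. G y * K (y - x))" for x
    by (rule Bochner_Integration.integrable_bound[OF integrable_mult_right[OF Gi, of KB]])
       (auto intro!: AE_I2 simp: G0 K0 KBpos GKb abs_mult)
  have iG2K: "integrable lborel (\<lambda>y. (G y)\<^sup>2 * K (y - x))" for x
    by (rule Bochner_Integration.integrable_bound[OF integrable_mult_right[OF G2, of KB]])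
       (auto intro!: AE_I2 simp: G0 K0 KBpos G2Kb abs_mult)
  have iKs: "integrable lborel (\<lambda>y. K (y - x))" for x
  proof -
    have "integrable lborel (\<lambda>y. K (- x + 1 * y))"
      using lborel_integrable_real_affine_iff[where c=1 and f=K and t="-x"] Ki by simp
    then show ?thesis by simp
  qed
  have Ks: "(LINT y|lborel. K (y - x)) = Kt" for x
  proof -
    have "(LINT y|lborel. K y) = \<bar>1\<bar> *\<^sub>R (LINT y|lborel. K (- x + 1 * y))"
      by (rule lborel_integral_real_affine) simp
    then show ?thesis using Kt by simp
  qed
  have Pb: "P x \<le> KB * (LINT y|lborel. G y)" for x
  proof -
    have "P x \<le> (LINT y|lborel. KB * G y)"
      unfolding P_def using iGK Gi by (intro integral_mono) (auto simp: GKb)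
    then show ?thesis by simp
  qed
  have P0: "P x \<ge> 0" for x unfolding P_def by (intro integral_nonneg_AE) (auto simp: G0 K0)
  show i1: "integrable lborel (\<lambda>x. G x * (LINT y|lborel. G y * K (y - x)))"
    unfolding P_def[symmetric]
    by (rule Bochner_Integration.integrable_bound[OF integrable_mult_right[OF Gi, of "KB * (LINT y|lborel. G y)"]])
       (auto intro!: AE_I2 simp: G0 P0 KBpos abs_mult mult.commute[of _ "G _"] mult_left_mono[OF Pb G0])
  define H where "H = (\<lambda>(y, x). (G y)\<^sup>2 * K (y - x))"
  have Hint: "integrable (lborel \<Otimes>\<^sub>M lborel) H"
  proof (rule lborel_pair.Fubini_integrable)
    show "H \<in> borel_measurable (lborel \<Otimes>\<^sub>M lborel)" unfolding H_def by measurable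
    have "(\<lambda>y. LINT x|lborel. norm (H (y, x))) = (\<lambda>y. (G y)\<^sup>2 * Kt)"
    proof
      fix y
      have "(LINT x|lborel. norm (H (y, x))) = (LINT x|lborel. (G y)\<^sup>2 * K (y - x))"
        unfolding H_def by (simp add: K0 abs_mult)
      also have "\<dots> = (G y)\<^sup>2 * (LINT x|lborel. K (y - x))" by simp
      also have "\<dots> = (G y)\<^sup>2 * Kt" using integral_reflect_shift(1)[of K y] Kt by simp
      finally show "(LINT x|lborel. norm (H (y, x))) = (G y)\<^sup>2 * Kt" .
    qed
    then show "integrable lborel (\<lambda>y. LINT x|lborel. norm (H (y, x)))"
      using G2 by simp
    show "AE y in lborel. integrable lborel (\<lambda>x. H (y, x))"
      unfolding H_def using integral_reflect_shift(2)[of K] Ki by (auto intro!: integrable_mult_right)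
  qed
  have Qi: "integrable lborel Q"
    using lborel_pair.integrable_snd[of "\<lambda>y x. (G y)\<^sup>2 * K (y - x)"] Hint unfolding H_def Q_def by simp
  have "(LINT x|lborel. Q x) = (LINT y|lborel. LINT x|lborel. (G y)\<^sup>2 * K (y - x))"
    using lborel_pair.Fubini_integral[of "\<lambda>y x. (G y)\<^sup>2 * K (y - x)"] Hint unfolding H_def Q_def by simp
  also have "\<dots> = (LINT y|lborel. (G y)\<^sup>2 * Kt)"
    using integral_reflect_shift(1)[of K] Kt by simp
  finally have Qint: "(LINT x|lborel. Q x) = Kt * (LINT y|lborel. (G y)\<^sup>2)" by simp
  have pw: "G x * P x \<le> Kt / 2 * (G x)\<^sup>2 + Q x / 2" for x
  proof -
    have "G x * P x = (LINT y|lborel. G x * G y * K (y - x))"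
      unfolding P_def by (simp add: mult.assoc)
    also have "\<dots> \<le> (LINT y|lborel. (G x)\<^sup>2 / 2 * K (y - x) + (G y)\<^sup>2 * K (y - x) / 2)"
    proof (rule integral_mono)
      show "integrable lborel (\<lambda>y. G x * G y * K (y - x))"
        using iGK[of x] by (simp add: mult.assoc)
      show "integrable lborel (\<lambda>y. (G x)\<^sup>2 / 2 * K (y - x) + (G y)\<^sup>2 * K (y - x) / 2)"
        using iKs[of x] iG2K[of x] by auto
      fix y
      have "G x * G y \<le> (G x)\<^sup>2 / 2 + (G y)\<^sup>2 / 2"
        using young_ineq[of 1 "G x" "G y"] by simp
      then have "G x * G y * K (y - x) \<le> ((G x)\<^sup>2 / 2 + (G y)\<^sup>2 / 2) * K (y - x)"
        by (rule mult_right_mono) (rule K0)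
      then show "G x * G y * K (y - x) \<le> (G x)\<^sup>2 / 2 * K (y - x) + (G y)\<^sup>2 * K (y - x) / 2"
        by (simp add: algebra_simps)
    qed
    also have "\<dots> = (G x)\<^sup>2 / 2 * (LINT y|lborel. K (y - x)) + Q x / 2"
      unfolding Q_def using iKs[of x] iG2K[of x] by simp
    also have "\<dots> = Kt / 2 * (G x)\<^sup>2 + Q x / 2"
      unfolding Ks by simp
    finally show ?thesis .
  qed
  have "(LINT x|lborel. G x * P x) \<le> (LINT x|lborel. Kt / 2 * (G x)\<^sup>2 + Q x / 2)"
    using i1 G2 Qi pw unfolding P_def[symmetric] by (intro integral_mono) auto
  also have "\<dots> = Kt / 2 * (LINT x|lborel. (G x)\<^sup>2) + (LINT x|lborel. Q x) / 2"
    using G2 Qi by simp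
  also have "\<dots> = Kt * (LINT x|lborel. (G x)\<^sup>2)"
    unfolding Qint by simp
  finally show "(LINT x|lborel. G x * (LINT y|lborel. G y * K (y - x))) \<le> Kt * (LINT x|lborel. (G x)\<^sup>2)"
    unfolding P_def .
qed




lemma gauss_eps:
  fixes \<epsilon> :: real assumes e: "\<epsilon> > 0"
  shows "integrable lborel (\<lambda>t. exp (- \<epsilon> * t\<^sup>2))" and "(LINT t|lborel. exp (- \<epsilon> * t\<^sup>2)) = sqrt (pi / \<epsilon>)"
proof -
  have eq: "(\<lambda>t. exp (- \<epsilon> * t\<^sup>2)) = (\<lambda>t. exp (- ((2 * \<epsilon>) * t\<^sup>2) / 2))" by auto
  have e2: "2 * \<epsilon> > 0" using e by simp
  show "integrable lborel (\<lambda>t. exp (- \<epsilon> * t\<^sup>2))" unfolding eq by (rule real_gauss(1)[OF e2])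
  show "(LINT t|lborel. exp (- \<epsilon> * t\<^sup>2)) = sqrt (pi / \<epsilon>)" unfolding eq using real_gauss(2)[of "2 * \<epsilon>"] e by simp
qed

definition Kr :: "real \<Rightarrow> real \<Rightarrow> real \<Rightarrow> real" where
  "Kr \<epsilon> \<beta> s = sqrt (pi / \<epsilon>) * exp (- ((\<beta>\<^sup>2 / (2 * \<epsilon>)) * s\<^sup>2) / 2)"

lemma Kr_props:
  assumes e: "\<epsilon> > 0" and b: "\<beta> \<noteq> 0"
  shows "Kr \<epsilon> \<beta> s \<ge> 0" and "Kr \<epsilon> \<beta> s \<le> sqrt (pi / \<epsilon>)" and "integrable lborel (Kr \<epsilon> \<beta>)"
    and "(LINT s|lborel. Kr \<epsilon> \<beta> s) = 2 * pi / \<bar>\<beta>\<bar>" and "Kr \<epsilon> \<beta> \<in> borel_measurable lborel"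
proof -
  have a: "\<beta>\<^sup>2 / (2 * \<epsilon>) > 0" using e b by simp
  show "Kr \<epsilon> \<beta> s \<ge> 0" unfolding Kr_def using e by simp
  have "0 \<le> (\<beta>\<^sup>2 / (2 * \<epsilon>)) * s\<^sup>2" using a by (intro mult_nonneg_nonneg) auto
  then have "exp (- ((\<beta>\<^sup>2 / (2 * \<epsilon>)) * s\<^sup>2) / 2) \<le> 1" by simp
  then show "Kr \<epsilon> \<beta> s \<le> sqrt (pi / \<epsilon>)" unfolding Kr_def
    using mult_left_mono[of "exp (- ((\<beta>\<^sup>2 / (2 * \<epsilon>)) * s\<^sup>2) / 2)" 1 "sqrt (pi / \<epsilon>)"] e by simp
  show "integrable lborel (Kr \<epsilon> \<beta>)" unfolding Kr_def[abs_def]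
    using real_gauss(1)[OF a] by simp
  have "(LINT s|lborel. Kr \<epsilon> \<beta> s) = sqrt (pi / \<epsilon>) * sqrt (2 * pi / (\<beta>\<^sup>2 / (2 * \<epsilon>)))"
    unfolding Kr_def using real_gauss(2)[OF a] by simp
  also have "\<dots> = sqrt ((2 * pi / \<bar>\<beta>\<bar>)\<^sup>2)"
    unfolding real_sqrt_mult[symmetric] using e b by (simp add: field_simps power2_eq_square)
  also have "\<dots> = 2 * pi / \<bar>\<beta>\<bar>" by simp
  finally show "(LINT s|lborel. Kr \<epsilon> \<beta> s) = 2 * pi / \<bar>\<beta>\<bar>" .
  show "Kr \<epsilon> \<beta> \<in> borel_measurable lborel" unfolding Kr_def[abs_def] by measurable
qed

lemma inner_gauss:
  assumes e: "\<epsilon> > 0"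
  shows "integrable lborel (\<lambda>t. complex_of_real (exp (- \<epsilon> * t\<^sup>2)) * exp (\<i> * complex_of_real (- \<beta> * t * x)) * exp (\<i> * complex_of_real (\<beta> * t * y)))"
    and "(LINT t|lborel. complex_of_real (exp (- \<epsilon> * t\<^sup>2)) * exp (\<i> * complex_of_real (- \<beta> * t * x)) * exp (\<i> * complex_of_real (\<beta> * t * y)))
       = complex_of_real (Kr \<epsilon> \<beta> (y - x))"
proof -
  define b where "b = \<i> * complex_of_real (\<beta> * (y - x))"
  have a: "2 * \<epsilon> > 0" using e by simp
  have eq: "(\<lambda>t. complex_of_real (exp (- \<epsilon> * t\<^sup>2)) * exp (\<i> * complex_of_real (- \<beta> * t * x)) * exp (\<i> * complex_of_real (\<beta> * t * y)))
     = (\<lambda>t. exp (- (complex_of_real (2 * \<epsilon>) * (complex_of_real t)\<^sup>2) / 2 + b * complex_of_real t))"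
  proof
    fix t
    have "complex_of_real (exp (- \<epsilon> * t\<^sup>2)) * exp (\<i> * complex_of_real (- \<beta> * t * x)) * exp (\<i> * complex_of_real (\<beta> * t * y))
        = exp (complex_of_real (- \<epsilon> * t\<^sup>2) + \<i> * complex_of_real (- \<beta> * t * x) + \<i> * complex_of_real (\<beta> * t * y))"
      by (simp only: exp_add exp_of_real)
    also have "complex_of_real (- \<epsilon> * t\<^sup>2) + \<i> * complex_of_real (- \<beta> * t * x) + \<i> * complex_of_real (\<beta> * t * y)
       = - (complex_of_real (2 * \<epsilon>) * (complex_of_real t)\<^sup>2) / 2 + b * complex_of_real t"
      unfolding b_def by (simp add: algebra_simps)
    finally show "complex_of_real (exp (- \<epsilon> * t\<^sup>2)) * exp (\<i> * complex_of_real (- \<beta> * t * x)) * exp (\<i> * complex_of_real (\<beta> * t * y))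
       = exp (- (complex_of_real (2 * \<epsilon>) * (complex_of_real t)\<^sup>2) / 2 + b * complex_of_real t)" .
  qed
  show "integrable lborel (\<lambda>t. complex_of_real (exp (- \<epsilon> * t\<^sup>2)) * exp (\<i> * complex_of_real (- \<beta> * t * x)) * exp (\<i> * complex_of_real (\<beta> * t * y)))"
    unfolding eq by (rule gauss_complex(1)[OF a])
  have "(LINT t|lborel. exp (- (complex_of_real (2 * \<epsilon>) * (complex_of_real t)\<^sup>2) / 2 + b * complex_of_real t))
     = complex_of_real (sqrt (2 * pi / (2 * \<epsilon>))) * exp (b\<^sup>2 / (2 * complex_of_real (2 * \<epsilon>)))"
    by (rule gauss_complex(2)[OF a])
  also have "\<dots> = complex_of_real (Kr \<epsilon> \<beta> (y - x))"
  proof -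
    have "b\<^sup>2 / (2 * complex_of_real (2 * \<epsilon>)) = complex_of_real (- ((\<beta>\<^sup>2 / (2 * \<epsilon>)) * (y - x)\<^sup>2) / 2)"
      unfolding b_def using e by (simp add: field_simps power2_eq_square)
    then show ?thesis unfolding Kr_def using e by (simp add: exp_of_real[symmetric])
  qed
  finally show "(LINT t|lborel. complex_of_real (exp (- \<epsilon> * t\<^sup>2)) * exp (\<i> * complex_of_real (- \<beta> * t * x)) * exp (\<i> * complex_of_real (\<beta> * t * y)))
       = complex_of_real (Kr \<epsilon> \<beta> (y - x))" unfolding eq .
qed

lemma borel_measurable_cnj'[measurable (raw)]:
  "f \<in> borel_measurable M \<Longrightarrow> (\<lambda>x. cnj (f x)) \<in> borel_measurable M"
  by (rule borel_measurable_continuous_on[where f=cnj]) (auto intro: continuous_intros)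

lemma plancherel_eps:
  fixes g :: "real \<Rightarrow> complex" and \<beta> \<epsilon> :: real
  assumes gi: "integrable lborel g" and g2: "integrable lborel (\<lambda>x. (cmod (g x))\<^sup>2)"
    and b: "\<beta> \<noteq> 0" and e: "\<epsilon> > 0"
  shows "integrable lborel (\<lambda>t. exp (- \<epsilon> * t\<^sup>2) * (cmod (hat \<beta> g t))\<^sup>2)"
    and "(LINT t|lborel. exp (- \<epsilon> * t\<^sup>2) * (cmod (hat \<beta> g t))\<^sup>2) \<le> 2 * pi / \<bar>\<beta>\<bar> * (LINT x|lborel. (cmod (g x))\<^sup>2)"
proof -
  have gm[measurable]: "g \<in> borel_measurable lborel" using gi by (rule borel_measurable_integrable)
  define h where "h = hat \<beta> g"
  have hm[measurable]: "h \<in> borel_measurable lborel" unfolding h_def using gi by (rule hat_measurable)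
  define N1 where "N1 = (LINT x|lborel. cmod (g x))"
  have hb: "cmod (h t) \<le> N1" for t unfolding h_def N1_def using gi by (rule hat_bound)
  have N1pos: "N1 \<ge> 0" using hb[of 0] norm_ge_zero[of "h 0"] by linarith
  have eg: "integrable lborel (\<lambda>t. exp (- \<epsilon> * t\<^sup>2))" using gauss_eps(1)[OF e] .
  show Ji: "integrable lborel (\<lambda>t. exp (- \<epsilon> * t\<^sup>2) * (cmod (hat \<beta> g t))\<^sup>2)"
    unfolding h_def[symmetric]
  proof (rule Bochner_Integration.integrable_bound[OF integrable_mult_right[OF eg, of "N1\<^sup>2"]])
    show "(\<lambda>t. exp (- \<epsilon> * t\<^sup>2) * (cmod (h t))\<^sup>2) \<in> borel_measurable lborel" by measurable
    show "AE t in lborel. norm (exp (- \<epsilon> * t\<^sup>2) * (cmod (h t))\<^sup>2) \<le> norm (N1\<^sup>2 * exp (- \<epsilon> * t\<^sup>2))"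
    proof (intro AE_I2)
      fix t
      have "(cmod (h t))\<^sup>2 \<le> N1\<^sup>2" using hb[of t] by (simp add: power_mono)
      then show "norm (exp (- \<epsilon> * t\<^sup>2) * (cmod (h t))\<^sup>2) \<le> norm (N1\<^sup>2 * exp (- \<epsilon> * t\<^sup>2))"
        by (simp add: abs_mult mult.commute)
    qed
  qed
  define u where "u t = complex_of_real (exp (- \<epsilon> * t\<^sup>2)) * cnj (h t)" for t
  have um[measurable]: "u \<in> borel_measurable lborel" unfolding u_def[abs_def] by measurable
  have ui: "integrable lborel u"
  proof (rule Bochner_Integration.integrable_bound[OF integrable_mult_right[OF eg, of "N1"]])
    show "u \<in> borel_measurable lborel" by measurable
    show "AE t in lborel. norm (u t) \<le> norm (N1 * exp (- \<epsilon> * t\<^sup>2))"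
      using hb N1pos by (intro AE_I2) (simp add: u_def norm_mult abs_mult mult.commute mult_left_mono)
  qed
  define Jv where "Jv = (LINT t|lborel. exp (- \<epsilon> * t\<^sup>2) * (cmod (h t))\<^sup>2)"
  have Jpos: "Jv \<ge> 0" unfolding Jv_def by (intro integral_nonneg_AE) auto
  define C where "C x = (LINT y|lborel. g y * complex_of_real (Kr \<epsilon> \<beta> (y - x)))" for x
  have KrM[measurable]: "Kr \<epsilon> \<beta> \<in> borel_measurable lborel" using Kr_props(5)[OF e b] .
  have Cm[measurable]: "C \<in> borel_measurable lborel" unfolding C_def by measurable
  have step1: "complex_of_real Jv = (LINT t|lborel. u t * h t)"
  proof -
    have "complex_of_real Jv = (LINT t|lborel. complex_of_real (exp (- \<epsilon> * t\<^sup>2) * (cmod (h t))\<^sup>2))"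
      unfolding Jv_def by (rule integral_complex_of_real[symmetric])
    also have "\<dots> = (LINT t|lborel. u t * h t)"
    proof (intro Bochner_Integration.integral_cong refl)
      fix t
      have nsq: "(complex_of_real (cmod z))\<^sup>2 = z * cnj z" for z
        using complex_norm_square[of z] by (metis of_real_power)
      show "complex_of_real (exp (- \<epsilon> * t\<^sup>2) * (cmod (h t))\<^sup>2) = u t * h t"
        unfolding u_def by (simp add: nsq mult_ac)
    qed
    finally show ?thesis .
  qed
  have step2: "(LINT t|lborel. u t * h t) = (LINT x|lborel. g x * (LINT t|lborel. u t * exp (\<i> * complex_of_real (\<beta> * t * x))))"
    unfolding h_def hat_def by (rule mult_formula[OF ui gi])
  have step3: "(LINT t|lborel. u t * exp (\<i> * complex_of_real (\<beta> * t * x))) = cnj (C x)" for x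
  proof -
    define v where "v t = complex_of_real (exp (- \<epsilon> * t\<^sup>2)) * exp (\<i> * complex_of_real (- \<beta> * t * x))" for t
    have vi: "integrable lborel v"
    proof (rule Bochner_Integration.integrable_bound[OF eg])
      show "v \<in> borel_measurable lborel" unfolding v_def[abs_def] by measurable
      show "AE t in lborel. norm (v t) \<le> norm (exp (- \<epsilon> * t\<^sup>2))"
        by (intro AE_I2) (simp add: v_def norm_mult norm_exp_i_times)
    qed
    have "(LINT t|lborel. u t * exp (\<i> * complex_of_real (\<beta> * t * x))) = (LINT t|lborel. cnj (v t * h t))"
    proof (intro Bochner_Integration.integral_cong refl)
      fix t
      have "cnj (exp (\<i> * complex_of_real (- \<beta> * t * x))) = exp (\<i> * complex_of_real (\<beta> * t * x))"
        by (simp add: exp_cnj)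
      then show "u t * exp (\<i> * complex_of_real (\<beta> * t * x)) = cnj (v t * h t)"
        unfolding u_def v_def by (simp add: mult_ac)
    qed
    also have "\<dots> = cnj (LINT t|lborel. v t * h t)"
      by (rule Bochner_Integration.integral_cnj)
    also have "(LINT t|lborel. v t * h t) = (LINT y|lborel. g y * (LINT t|lborel. v t * exp (\<i> * complex_of_real (\<beta> * t * y))))"
      unfolding h_def hat_def by (rule mult_formula[OF vi gi])
    also have "\<dots> = C x"
      unfolding C_def v_def using inner_gauss(2)[OF e, of \<beta> x] by simp
    finally show ?thesis .
  qed
  define P where "P x = (LINT y|lborel. cmod (g y) * Kr \<epsilon> \<beta> (y - x))" for x
  have Pm[measurable]: "P \<in> borel_measurable lborel" unfolding P_def by measurable
  have CP: "cmod (C x) \<le> P x" for x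
  proof -
    have "cmod (C x) \<le> (LINT y|lborel. cmod (g y * complex_of_real (Kr \<epsilon> \<beta> (y - x))))"
      unfolding C_def by (rule integral_norm_bound)
    also have "\<dots> = P x" unfolding P_def using Kr_props(1)[OF e b] by (simp add: norm_mult)
    finally show ?thesis .
  qed
  have conv: "integrable lborel (\<lambda>x. cmod (g x) * P x)" "(LINT x|lborel. cmod (g x) * P x) \<le> 2 * pi / \<bar>\<beta>\<bar> * (LINT x|lborel. (cmod (g x))\<^sup>2)"
    unfolding P_def
    using conv_bound[of "\<lambda>x. cmod (g x)" "Kr \<epsilon> \<beta>" "sqrt (pi / \<epsilon>)" "2 * pi / \<bar>\<beta>\<bar>"]
      Kr_props[OF e b] integrable_norm[OF gi] g2 by auto
  have "Jv = cmod (complex_of_real Jv)" using Jpos by simp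
  also have "\<dots> = cmod (LINT x|lborel. g x * cnj (C x))" unfolding step1 step2 step3 ..
  also have "\<dots> \<le> (LINT x|lborel. cmod (g x * cnj (C x)))" by (rule integral_norm_bound)
  also have "\<dots> \<le> (LINT x|lborel. cmod (g x) * P x)"
  proof (rule integral_mono)
    show "integrable lborel (\<lambda>x. cmod (g x * cnj (C x)))"
    proof (rule Bochner_Integration.integrable_bound[OF conv(1)])
      show "(\<lambda>x. cmod (g x * cnj (C x))) \<in> borel_measurable lborel" by measurable
      show "AE x in lborel. norm (cmod (g x * cnj (C x))) \<le> norm (cmod (g x) * P x)"
      proof (intro AE_I2)
        fix x
        have "cmod (C x) \<le> \<bar>P x\<bar>" using CP[of x] by linarith
        then show "norm (cmod (g x * cnj (C x))) \<le> norm (cmod (g x) * P x)"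
          by (simp add: norm_mult abs_mult mult_left_mono)
      qed
    qed
    show "integrable lborel (\<lambda>x. cmod (g x) * P x)" by (rule conv(1))
    show "cmod (g x * cnj (C x)) \<le> cmod (g x) * P x" for x
      using CP[of x] by (simp add: norm_mult mult_left_mono)
  qed
  also have "\<dots> \<le> 2 * pi / \<bar>\<beta>\<bar> * (LINT x|lborel. (cmod (g x))\<^sup>2)" by (rule conv(2))
  finally show "(LINT t|lborel. exp (- \<epsilon> * t\<^sup>2) * (cmod (hat \<beta> g t))\<^sup>2) \<le> 2 * pi / \<bar>\<beta>\<bar> * (LINT x|lborel. (cmod (g x))\<^sup>2)"
    unfolding Jv_def h_def .
qed

lemma plancherel:
  fixes g :: "real \<Rightarrow> complex" and \<beta> :: real
  assumes gi: "integrable lborel g" and g2: "integrable lborel (\<lambda>x. (cmod (g x))\<^sup>2)"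
    and b: "\<beta> \<noteq> 0"
  shows "integrable lborel (\<lambda>t. (cmod (hat \<beta> g t))\<^sup>2)"
proof -
  define h where "h = hat \<beta> g"
  have hm[measurable]: "h \<in> borel_measurable lborel" unfolding h_def using gi by (rule hat_measurable)
  define f where "f n t = exp (- (1 / real (Suc n)) * t\<^sup>2) * (cmod (h t))\<^sup>2" for n t
  have e: "1 / real (Suc n) > 0" for n by simp
  have fi: "integrable lborel (f n)" for n
    unfolding f_def h_def using plancherel_eps(1)[OF gi g2 b e[of n]] .
  have fb: "integral\<^sup>L lborel (f n) \<le> 2 * pi / \<bar>\<beta>\<bar> * (LINT x|lborel. (cmod (g x))\<^sup>2)" for n
    unfolding f_def h_def using plancherel_eps(2)[OF gi g2 b e[of n]] .
  have fmono: "f n t \<le> f m t" if "n \<le> m" for n m t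
  proof -
    have "1 / real (Suc m) \<le> 1 / real (Suc n)" using that by (simp add: frac_le)
    then have "- (1 / real (Suc n)) * t\<^sup>2 \<le> - (1 / real (Suc m)) * t\<^sup>2"
      by (intro mult_right_mono) auto
    then show ?thesis unfolding f_def by (intro mult_right_mono) auto
  qed
  show ?thesis unfolding h_def[symmetric]
  proof (rule integrable_monotone_convergence[where f = f])
    show "integrable lborel (f i)" for i by (rule fi)
    show "AE x in lborel. mono (\<lambda>n. f n x)"
      by (intro AE_I2) (auto simp: mono_def fmono)
    show "AE x in lborel. (\<lambda>i. f i x) \<longlonglongrightarrow> (cmod (h x))\<^sup>2"
    proof (intro AE_I2)
      fix t
      have "(\<lambda>n. 1 / real (Suc n)) \<longlonglongrightarrow> 0" by (rule LIMSEQ_Suc[OF lim_1_over_n])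
      then have "(\<lambda>n. exp (- (1 / real (Suc n)) * t\<^sup>2) * (cmod (h t))\<^sup>2) \<longlonglongrightarrow> exp (- 0 * t\<^sup>2) * (cmod (h t))\<^sup>2"
        by (intro tendsto_intros)
      then show "(\<lambda>i. f i t) \<longlonglongrightarrow> (cmod (h t))\<^sup>2" unfolding f_def by simp
    qed
    have inc: "incseq (\<lambda>n. integral\<^sup>L lborel (f n))"
      by (intro monoI integral_mono fi) (auto simp: fmono)
    have bdd: "bdd_above (range (\<lambda>n. integral\<^sup>L lborel (f n)))"
      using fb by (auto intro!: bdd_aboveI)
    show "(\<lambda>i. integral\<^sup>L lborel (f i)) \<longlonglongrightarrow> (SUP i. integral\<^sup>L lborel (f i))"
      by (rule LIMSEQ_incseq_SUP[OF bdd inc])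
    show "(\<lambda>x. (cmod (h x))\<^sup>2) \<in> borel_measurable lborel" by measurable
  qed
qed




definition gfun :: "real \<Rightarrow> complex \<Rightarrow> real \<Rightarrow> complex" where
  "gfun a b x = exp (- (complex_of_real a * (complex_of_real x)\<^sup>2) / 2 + b * complex_of_real x)"

lemma gfun_props:
  assumes a: "a > 0"
  shows "gfun a b \<in> borel_measurable lborel" and "integrable lborel (gfun a b)"
    and "integrable lborel (\<lambda>x. (cmod (gfun a b x))\<^sup>2)"
proof -
  show "integrable lborel (gfun a b)" unfolding gfun_def[abs_def] by (rule gauss_complex(1)[OF a])
  then show "gfun a b \<in> borel_measurable lborel" by (rule borel_measurable_integrable)
  have a2: "2 * a > 0" using a by simp
  have eq: "(cmod (gfun a b x))\<^sup>2 = cmod (gfun (2 * a) (2 * b) x)" for x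
  proof -
    have "(cmod (gfun a b x))\<^sup>2 = cmod (gfun a b x * gfun a b x)"
      by (simp add: norm_mult power2_eq_square)
    also have "gfun a b x * gfun a b x = gfun (2 * a) (2 * b) x"
      unfolding gfun_def by (simp add: exp_add[symmetric] algebra_simps)
    finally show ?thesis .
  qed
  show "integrable lborel (\<lambda>x. (cmod (gfun a b x))\<^sup>2)"
    unfolding eq using integrable_norm[OF gauss_complex(1)[OF a2, of "2 * b"]] unfolding gfun_def .
qed

lemma gfun_hat:
  assumes a: "a > 0"
  shows "(LINT t|lborel. gfun a b t * exp (\<i> * complex_of_real (\<beta> * t * x)))
       = complex_of_real (sqrt (2 * pi / a)) * exp ((b + \<i> * complex_of_real (\<beta> * x))\<^sup>2 / (2 * complex_of_real a))"
proof -
  have "(\<lambda>t. gfun a b t * exp (\<i> * complex_of_real (\<beta> * t * x)))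
      = (\<lambda>t. exp (- (complex_of_real a * (complex_of_real t)\<^sup>2) / 2 + (b + \<i> * complex_of_real (\<beta> * x)) * complex_of_real t))"
    unfolding gfun_def by (auto simp: fun_eq_iff exp_add[symmetric] algebra_simps)
  then show ?thesis using gauss_complex(2)[OF a] by simp
qed

lemma L2_indicator_mult:
  fixes \<phi> :: "real \<Rightarrow> complex" and R :: real
  assumes [measurable]: "\<phi> \<in> borel_measurable lborel" and p2: "integrable lborel (\<lambda>x. (cmod (\<phi> x))\<^sup>2)"
  shows "integrable lborel (\<lambda>x. indicator {-R..R} x * \<phi> x)"
    and "integrable lborel (\<lambda>x. (cmod (indicator {-R..R} x * \<phi> x))\<^sup>2)"
proof -
  have ii: "integrable lborel (\<lambda>x. (cmod (indicator {-R..R} x :: complex))\<^sup>2)"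
  proof -
    have "(\<lambda>x. (cmod (indicator {-R..R} x :: complex))\<^sup>2) = indicator {-R..R}"
      by (auto simp: fun_eq_iff indicator_def)
    moreover have "integrable lborel (indicator {-R..R} :: real \<Rightarrow> real)"
      by (rule integrable_real_indicator) (simp_all add: emeasure_lborel_Icc_eq)
    ultimately show ?thesis by simp
  qed
  show "integrable lborel (\<lambda>x. indicator {-R..R} x * \<phi> x)"
    by (rule L2_mult_integrable[OF _ _ ii p2]) auto
  show "integrable lborel (\<lambda>x. (cmod (indicator {-R..R} x * \<phi> x))\<^sup>2)"
    by (rule Bochner_Integration.integrable_bound[OF p2]) (auto simp: indicator_def)
qed




lemma main_pointwise:
  fixes \<gamma> :: real and \<phi> \<psi> :: "real \<Rightarrow> complex" and z :: complex
  assumes g: "\<gamma> > 0" and p: "\<phi> \<in> L2R" and F: "fourier_L2 (2 / \<gamma>\<^sup>2) \<phi> \<psi>"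
  shows "RBF_SB \<gamma> \<psi> z = exp (- z\<^sup>2 / complex_of_real (\<gamma>\<^sup>2)) *
           (exp ((- \<i> * z)\<^sup>2 / complex_of_real (\<gamma>\<^sup>2)) * RBF_SB \<gamma> \<phi> (- \<i> * z))"
proof -
  define \<alpha> where "\<alpha> = 2 / \<gamma>\<^sup>2"
  have ap: "\<alpha> > 0" unfolding \<alpha>_def using g by simp
  define c where "c = sqrt (\<alpha> / (2 * pi))"
  define K0 where "K0 = complex_of_real (kc \<gamma>) * exp (- 2 * z\<^sup>2 / complex_of_real (\<gamma>\<^sup>2))"
  define bz where "bz = 2 * complex_of_real (sqrt 2) * z / complex_of_real (\<gamma>\<^sup>2)"
  define w where "w t = K0 * gfun \<alpha> bz t" for t
  have wk: "RBF_kernel \<gamma> z t = w t" for t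
    unfolding w_def K0_def bz_def gfun_def \<alpha>_def kernel_closed[OF g] by (simp add: mult.assoc)
  have wm[measurable]: "w \<in> borel_measurable lborel"
    unfolding w_def[abs_def] using gfun_props(1)[OF ap] by measurable
  have w2: "integrable lborel (\<lambda>t. (cmod (w t))\<^sup>2)"
    unfolding w_def using integrable_mult_right[OF gfun_props(3)[OF ap, of bz], of "(cmod K0)\<^sup>2"]
    by (simp add: norm_mult power_mult_distrib)
  have wi: "integrable lborel w"
    unfolding w_def[abs_def] using gfun_props(2)[OF ap] by (rule integrable_mult_right)
  have pm[measurable]: "\<phi> \<in> borel_measurable lborel" and p2: "integrable lborel (\<lambda>x. (cmod (\<phi> x))\<^sup>2)"
    using p unfolding L2R_def by auto
  have F': "\<psi> \<in> L2R" and Dlim0: "((\<lambda>R::real. LINT t|lborel. (cmod (\<psi> t - complex_of_real (sqrt (\<alpha> / (2 * pi))) *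
          (LINT x|lborel. indicator {-R..R} x * (exp (- \<i> * complex_of_real (\<alpha> * t * x)) * \<phi> x))))\<^sup>2) \<longlongrightarrow> 0) at_top"
    using F unfolding fourier_L2_def \<alpha>_def by auto
  have psm[measurable]: "\<psi> \<in> borel_measurable lborel" and ps2: "integrable lborel (\<lambda>x. (cmod (\<psi> x))\<^sup>2)"
    using F' unfolding L2R_def by auto
  define gR where "gR R x = indicator {-R..R} x * \<phi> x" for R :: real and x
  define psR where "psR R t = complex_of_real c * hat (- \<alpha>) (gR R) t" for R t
  have gRi: "integrable lborel (gR R)" for R
    unfolding gR_def[abs_def] using L2_indicator_mult(1)[OF pm p2] .
  have gR2: "integrable lborel (\<lambda>x. (cmod (gR R x))\<^sup>2)" for R
    unfolding gR_def using L2_indicator_mult(2)[OF pm p2] .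
  have eqR: "complex_of_real (sqrt (\<alpha> / (2 * pi))) *
          (LINT x|lborel. indicator {-R..R} x * (exp (- \<i> * complex_of_real (\<alpha> * t * x)) * \<phi> x)) = psR R t" for R t
    unfolding psR_def hat_def gR_def c_def
    by (simp add: mult_ac)
  have Dlim: "((\<lambda>R. LINT t|lborel. (cmod (\<psi> t - psR R t))\<^sup>2) \<longlongrightarrow> 0) at_top"
    using Dlim0 unfolding eqR .
  have psRm[measurable]: "psR R \<in> borel_measurable lborel" for R
    unfolding psR_def[abs_def] using hat_measurable[OF gRi[of R], of "- \<alpha>"] by measurable
  have psR2: "integrable lborel (\<lambda>t. (cmod (psR R t))\<^sup>2)" for R
  proof -
    have "integrable lborel (\<lambda>t. c\<^sup>2 * (cmod (hat (- \<alpha>) (gR R) t))\<^sup>2)"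
      using plancherel[OF gRi gR2, of "- \<alpha>"] ap by simp
    then show ?thesis unfolding psR_def by (simp add: norm_mult power_mult_distrib c_def)
  qed
  define LR where "LR R = (LINT t|lborel. w t * psR R t)" for R
  define W2 where "W2 = (LINT t|lborel. (cmod (w t))\<^sup>2)"
  have W2pos: "W2 \<ge> 0" unfolding W2_def by (intro integral_nonneg_AE) auto
  have lim1: "(LR \<longlongrightarrow> (LINT t|lborel. w t * \<psi> t)) at_top"
  proof (rule tendstoI)
    fix \<eta> :: real assume eta: "\<eta> > 0"
    define e where "e = \<eta> / (2 * (W2 + 1))"
    have ep: "e > 0" unfolding e_def using eta W2pos by simp
    have "\<forall>\<^sub>F R in at_top. dist (LINT t|lborel. (cmod (\<psi> t - psR R t))\<^sup>2) 0 < \<eta> * e"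
      using tendstoD[OF Dlim, of "\<eta> * e"] eta ep by simp
    then show "\<forall>\<^sub>F R in at_top. dist (LR R) (LINT t|lborel. w t * \<psi> t) < \<eta>"
    proof (rule eventually_mono)
      fix R assume DR: "dist (LINT t|lborel. (cmod (\<psi> t - psR R t))\<^sup>2) 0 < \<eta> * e"
      define DD where "DD = (LINT t|lborel. (cmod (\<psi> t - psR R t))\<^sup>2)"
      have DDl: "DD < \<eta> * e" using DR unfolding DD_def by simp
      have dm[measurable]: "(\<lambda>t. psR R t - \<psi> t) \<in> borel_measurable lborel" by measurable
      have d2: "integrable lborel (\<lambda>t. (cmod (psR R t - \<psi> t))\<^sup>2)"
      proof (rule Bochner_Integration.integrable_bound[OF Bochner_Integration.integrable_add[OF integrable_mult_right[OF psR2[of R], of 2] integrable_mult_right[OF ps2, of 2]]])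
        show "(\<lambda>t. (cmod (psR R t - \<psi> t))\<^sup>2) \<in> borel_measurable lborel" by measurable
        show "AE t in lborel. norm ((cmod (psR R t - \<psi> t))\<^sup>2) \<le> norm (2 * (cmod (psR R t))\<^sup>2 + 2 * (cmod (\<psi> t))\<^sup>2)"
        proof (intro AE_I2)
          fix t
          have "cmod (psR R t - \<psi> t) \<le> cmod (psR R t) + cmod (\<psi> t)" by (rule norm_triangle_ineq4)
          then have "(cmod (psR R t - \<psi> t))\<^sup>2 \<le> (cmod (psR R t) + cmod (\<psi> t))\<^sup>2"
            by (intro power_mono) auto
          also have "\<dots> \<le> 2 * (cmod (psR R t))\<^sup>2 + 2 * (cmod (\<psi> t))\<^sup>2"
            using young_ineq[of 1 "cmod (psR R t)" "cmod (\<psi> t)"] by (simp add: power2_sum)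
          finally show "norm ((cmod (psR R t - \<psi> t))\<^sup>2) \<le> norm (2 * (cmod (psR R t))\<^sup>2 + 2 * (cmod (\<psi> t))\<^sup>2)"
            by simp
        qed
      qed
      have i1: "integrable lborel (\<lambda>t. w t * psR R t)" by (rule L2_mult_integrable[OF wm psRm w2 psR2])
      have i2: "integrable lborel (\<lambda>t. w t * \<psi> t)" by (rule L2_mult_integrable[OF wm psm w2 ps2])
      have "dist (LR R) (LINT t|lborel. w t * \<psi> t) = cmod (LINT t|lborel. w t * (psR R t - \<psi> t))"
        unfolding LR_def dist_norm using i1 i2 by (simp add: algebra_simps)
      also have "\<dots> \<le> e / 2 * W2 + 1 / (2 * e) * (LINT t|lborel. (cmod (psR R t - \<psi> t))\<^sup>2)"
        unfolding W2_def by (rule L2_pair_bound[OF wm dm w2 d2 ep])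
      also have "(LINT t|lborel. (cmod (psR R t - \<psi> t))\<^sup>2) = DD"
        unfolding DD_def by (simp add: norm_minus_commute)
      also have "e / 2 * W2 + 1 / (2 * e) * DD < \<eta>"
      proof -
        have "e / 2 * W2 \<le> \<eta> / 4"
          unfolding e_def using eta W2pos by (simp add: field_simps)
        moreover have "1 / (2 * e) * DD < \<eta> / 2"
          using DDl ep by (simp add: field_simps)
        ultimately show ?thesis using eta by linarith
      qed
      finally show "dist (LR R) (LINT t|lborel. w t * \<psi> t) < \<eta>" .
    qed
  qed
  define Vc where "Vc x = K0 * exp (bz\<^sup>2 / (2 * complex_of_real \<alpha>)) * gfun \<alpha> (- \<i> * bz) x" for x
  have hatw: "complex_of_real c * (LINT t|lborel. w t * exp (\<i> * complex_of_real (- \<alpha> * t * x))) = Vc x" for x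
  proof -
    have "(LINT t|lborel. w t * exp (\<i> * complex_of_real (- \<alpha> * t * x)))
        = K0 * (LINT t|lborel. gfun \<alpha> bz t * exp (\<i> * complex_of_real (- \<alpha> * t * x)))"
      unfolding w_def by (simp add: mult.assoc)
    also have "\<dots> = K0 * (complex_of_real (sqrt (2 * pi / \<alpha>)) * exp ((bz + \<i> * complex_of_real (- \<alpha> * x))\<^sup>2 / (2 * complex_of_real \<alpha>)))"
      using gfun_hat[OF ap, of bz "- \<alpha>" x] by simp
    finally have 1: "(LINT t|lborel. w t * exp (\<i> * complex_of_real (- \<alpha> * t * x)))
        = K0 * (complex_of_real (sqrt (2 * pi / \<alpha>)) * exp ((bz + \<i> * complex_of_real (- \<alpha> * x))\<^sup>2 / (2 * complex_of_real \<alpha>)))" .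
    have 2: "c * sqrt (2 * pi / \<alpha>) = 1"
      unfolding c_def real_sqrt_mult[symmetric] using ap by simp
    have 3: "exp ((bz + \<i> * complex_of_real (- \<alpha> * x))\<^sup>2 / (2 * complex_of_real \<alpha>)) = exp (bz\<^sup>2 / (2 * complex_of_real \<alpha>)) * gfun \<alpha> (- \<i> * bz) x"
    proof -
      have "(bz + \<i> * complex_of_real (- \<alpha> * x))\<^sup>2 / (2 * complex_of_real \<alpha>)
          = bz\<^sup>2 / (2 * complex_of_real \<alpha>) + (- (complex_of_real \<alpha> * (complex_of_real x)\<^sup>2) / 2 + (- \<i> * bz) * complex_of_real x)"
        using ap by (simp add: field_simps power2_eq_square)
      then show ?thesis unfolding gfun_def by (simp add: exp_add)
    qed
    have "complex_of_real c * (K0 * (complex_of_real (sqrt (2 * pi / \<alpha>)) * E)) = K0 * E" for E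
    proof -
      have "complex_of_real c * (K0 * (complex_of_real (sqrt (2 * pi / \<alpha>)) * E)) = complex_of_real (c * sqrt (2 * pi / \<alpha>)) * K0 * E"
        by (simp add: mult_ac)
      then show ?thesis unfolding 2 by simp
    qed
    then show ?thesis unfolding 1 3 Vc_def by (simp add: mult.assoc)
  qed
  have F5: "LR R = (LINT x|lborel. gR R x * Vc x)" for R
  proof -
    have "LR R = complex_of_real c * (LINT t|lborel. w t * hat (- \<alpha>) (gR R) t)"
      unfolding LR_def psR_def by (simp add: mult.left_commute)
    also have "(LINT t|lborel. w t * hat (- \<alpha>) (gR R) t)
        = (LINT x|lborel. gR R x * (LINT t|lborel. w t * exp (\<i> * complex_of_real (- \<alpha> * t * x))))"
      unfolding hat_def by (rule mult_formula[OF wi gRi])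
    also have "complex_of_real c * \<dots> = (LINT x|lborel. gR R x * (complex_of_real c * (LINT t|lborel. w t * exp (\<i> * complex_of_real (- \<alpha> * t * x)))))"
      by (simp add: mult.left_commute)
    also have "\<dots> = (LINT x|lborel. gR R x * Vc x)" unfolding hatw ..
    finally show ?thesis .
  qed
  have Vcm[measurable]: "Vc \<in> borel_measurable lborel"
    unfolding Vc_def[abs_def] using gfun_props(1)[OF ap] by measurable
  have Vc2: "integrable lborel (\<lambda>x. (cmod (Vc x))\<^sup>2)"
    unfolding Vc_def using integrable_mult_right[OF gfun_props(3)[OF ap, of "- \<i> * bz"], of "(cmod (K0 * exp (bz\<^sup>2 / (2 * complex_of_real \<alpha>))))\<^sup>2"]
    by (simp add: norm_mult power_mult_distrib)
  have pVi: "integrable lborel (\<lambda>x. \<phi> x * Vc x)" by (rule L2_mult_integrable[OF pm Vcm p2 Vc2])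
  have lim2: "((\<lambda>R. LINT x|lborel. gR R x * Vc x) \<longlongrightarrow> (LINT x|lborel. \<phi> x * Vc x)) at_top"
  proof (rule integral_dominated_convergence_at_top[where w = "\<lambda>x. cmod (\<phi> x * Vc x)"])
    show "(\<lambda>x. \<phi> x * Vc x) \<in> borel_measurable lborel" by measurable
    show "(\<lambda>x. gR R x * Vc x) \<in> borel_measurable lborel" for R unfolding gR_def by measurable
    show "integrable lborel (\<lambda>x. cmod (\<phi> x * Vc x))" using pVi by (rule integrable_norm)
    show "AE x in lborel. ((\<lambda>R. gR R x * Vc x) \<longlongrightarrow> \<phi> x * Vc x) at_top"
    proof (intro AE_I2)
      fix x :: real
      have "\<forall>\<^sub>F R in at_top. gR R x * Vc x = \<phi> x * Vc x"
        using eventually_ge_at_top[of "\<bar>x\<bar>"] by eventually_elim (auto simp: gR_def indicator_def)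
      then show "((\<lambda>R. gR R x * Vc x) \<longlongrightarrow> \<phi> x * Vc x) at_top"
        by (rule tendsto_eventually)
    qed
    show "\<forall>\<^sub>F R in at_top. AE x in lborel. norm (gR R x * Vc x) \<le> cmod (\<phi> x * Vc x)"
      by (intro always_eventually allI AE_I2) (auto simp: gR_def indicator_def norm_mult)
  qed
  have sq2: "(complex_of_real (sqrt 2))\<^sup>2 = 2"
    by (simp flip: of_real_power)
  have pw: "exp (- z\<^sup>2 / complex_of_real (\<gamma>\<^sup>2)) * (exp ((- \<i> * z)\<^sup>2 / complex_of_real (\<gamma>\<^sup>2)) * RBF_kernel \<gamma> (- \<i> * z) x) = Vc x" for x
  proof -
    define A where "A = - z\<^sup>2 / complex_of_real (\<gamma>\<^sup>2) + (- \<i> * z)\<^sup>2 / complex_of_real (\<gamma>\<^sup>2) + - 2 * (- \<i> * z)\<^sup>2 / complex_of_real (\<gamma>\<^sup>2)"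
    define B where "B = - 2 * z\<^sup>2 / complex_of_real (\<gamma>\<^sup>2) + bz\<^sup>2 / (2 * complex_of_real \<alpha>)"
    define E where "E = - (complex_of_real (2 / \<gamma>\<^sup>2) * (complex_of_real x)\<^sup>2) / 2 + (2 * complex_of_real (sqrt 2) * (- \<i> * z) / complex_of_real (\<gamma>\<^sup>2)) * complex_of_real x"
    have A0: "A = 0" unfolding A_def by (simp add: field_simps power2_eq_square)
    have B0: "B = 0" unfolding B_def bz_def \<alpha>_def using g by (simp add: field_simps power2_eq_square sq2[unfolded power2_eq_square])
    have E': "E = - (complex_of_real \<alpha> * (complex_of_real x)\<^sup>2) / 2 + (- \<i> * bz) * complex_of_real x"
      unfolding E_def \<alpha>_def bz_def by (simp add: algebra_simps)
    have "exp (- z\<^sup>2 / complex_of_real (\<gamma>\<^sup>2)) * (exp ((- \<i> * z)\<^sup>2 / complex_of_real (\<gamma>\<^sup>2)) * RBF_kernel \<gamma> (- \<i> * z) x)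
        = complex_of_real (kc \<gamma>) * exp A * exp E"
      unfolding kernel_closed[OF g] A_def E_def exp_add by (simp add: mult_ac)
    also have "\<dots> = complex_of_real (kc \<gamma>) * exp B * exp E" unfolding A0 B0 ..
    also have "\<dots> = Vc x"
      unfolding Vc_def K0_def B_def E' gfun_def exp_add by (simp add: mult_ac)
    finally show ?thesis .
  qed
  have F8: "exp (- z\<^sup>2 / complex_of_real (\<gamma>\<^sup>2)) * (exp ((- \<i> * z)\<^sup>2 / complex_of_real (\<gamma>\<^sup>2)) * RBF_SB \<gamma> \<phi> (- \<i> * z))
      = (LINT x|lborel. \<phi> x * Vc x)"
  proof -
    have "exp (- z\<^sup>2 / complex_of_real (\<gamma>\<^sup>2)) * (exp ((- \<i> * z)\<^sup>2 / complex_of_real (\<gamma>\<^sup>2)) * RBF_SB \<gamma> \<phi> (- \<i> * z))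
      = (LINT x|lborel. (exp (- z\<^sup>2 / complex_of_real (\<gamma>\<^sup>2)) * (exp ((- \<i> * z)\<^sup>2 / complex_of_real (\<gamma>\<^sup>2)) * RBF_kernel \<gamma> (- \<i> * z) x)) * \<phi> x)"
      unfolding RBF_SB_def by (simp add: mult.assoc)
    also have "\<dots> = (LINT x|lborel. \<phi> x * Vc x)" unfolding pw by (simp add: mult.commute)
    finally show ?thesis .
  qed
  have lim3: "(LR \<longlongrightarrow> (LINT x|lborel. \<phi> x * Vc x)) at_top"
    unfolding F5[abs_def] by (rule lim2)
  have "(LINT t|lborel. w t * \<psi> t) = (LINT x|lborel. \<phi> x * Vc x)"
    using tendsto_unique[OF trivial_limit_at_top_linorder lim1 lim3] .
  moreover have "RBF_SB \<gamma> \<psi> z = (LINT t|lborel. w t * \<psi> t)"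
    unfolding RBF_SB_def wk ..
  ultimately show ?thesis using F8 by simp
qed



theorem mainTheorem18:
  fixes \<gamma> :: real and f :: "complex \<Rightarrow> complex" and \<phi> \<psi> :: "real \<Rightarrow> complex"
  assumes "\<gamma> > 0"
    and "f \<in> H_space \<gamma>"
    and "\<phi> \<in> L2R" and "RBF_SB \<gamma> \<phi> = f"
    and "fourier_L2 (2 / \<gamma>\<^sup>2) \<phi> \<psi>"
  shows "RBF_SB \<gamma> \<psi> = M_RBF_inv \<gamma> (comp_op (\<lambda>z. - \<i> * z) (M_RBF \<gamma> f))"
proof (rule ext)
  fix z
  show "RBF_SB \<gamma> \<psi> z = M_RBF_inv \<gamma> (comp_op (\<lambda>z. - \<i> * z) (M_RBF \<gamma> f)) z"
    unfolding M_RBF_inv_def comp_op_def M_RBF_def assms(4)[symmetric]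
    by (rule main_pointwise[OF assms(1) assms(3) assms(5)])
qed

end
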